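(* Fix $0<\alpha<1$ and $f\in C^\alpha(\Omega)$. Then for every $\varphi\in C(\Omega)$, $$\lim_{n\to\infty}\left\|\frac1n\,\frac{\mathscr{L}_f^n(S_n\varphi)}{\mathscr{L}_f^n\mathbf{1}}-\int_\Omega\varphi\,h_f\,d\nu_f\right\|_0=0.$$
   Context: Let $(M,d)$ be a compact metric space and $\mu$ a Borel probability measure on $M$ with full support. $\Omega=M^{\mathbb{N}}$ with metric $d_\Omega(x,y)=\sum_{n\ge1}2^{-n}d(x_n,y_n)$, $\sigma$ the left shift, $C(\Omega)$ the continuous functions with sup norm $\|\cdot\|_0$, $C^\alpha(\Omega)$ the $\alpha$-Hölder functions. The Ruelle operator is $\mathscr{L}_f\varphi(x)=\int_M e^{f(ax)}\varphi(ax)\,d\mu(a)$ with $ax=(a,x_1,x_2,\dots)$; $\mathbf 1$ is the constant function $1$; $S_n\varphi=\sum_{j=0}^{n-1}\varphi\circ\sigma^j$. For $f\in C^\alpha(\Omega)$, $\lambda_f>0$, $h_f>0$ and $\nu_f$ are the maximal eigenvalue, eigenfunction and eigenmeasure from the Ruelle–Perron–Frobenius theorem: $\mathscr{L}_fh_f=\lambda_fh_f$, $\mathscr{L}_f^*\nu_f=\lambda_f\nu_f$, $\nu_f$ a probability measure, $\int h_f d\nu_f=1$, and $\|\lambda_f^{-n}\mathscr{L}_f^n\varphi-h_f\int\varphi\,d\nu_f\|_0\to0$ for all $\varphi\in C(\Omega)$. *)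

theory Defs
  imports "HOL-Probability.Probability"
begin

text \<open>The alphabet M is the (compact metric) type 'a; Omega = M^N is the type nat => 'a,
  coordinates indexed from 0 (x 0 is the paper's x_1).\<close>

definition dOm :: "(nat \<Rightarrow> 'a::metric_space) \<Rightarrow> (nat \<Rightarrow> 'a) \<Rightarrow> real" where
  "dOm x y = (\<Sum>n. (1/2) ^ Suc n * dist (x n) (y n))"

definition shift :: "(nat \<Rightarrow> 'a) \<Rightarrow> (nat \<Rightarrow> 'a)" where
  "shift x = (\<lambda>n. x (Suc n))"

definition cons_seq :: "'a \<Rightarrow> (nat \<Rightarrow> 'a) \<Rightarrow> (nat \<Rightarrow> 'a)" where
  "cons_seq a x = case_nat a x"

definition Om_cont :: "((nat \<Rightarrow> 'a::metric_space) \<Rightarrow> real) \<Rightarrow> bool" where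
  "Om_cont \<phi> \<longleftrightarrow> (\<forall>x. \<forall>e>0. \<exists>d>0. \<forall>y. dOm x y < d \<longrightarrow> \<bar>\<phi> y - \<phi> x\<bar> < e)"

definition Om_holder :: "real \<Rightarrow> ((nat \<Rightarrow> 'a::metric_space) \<Rightarrow> real) \<Rightarrow> bool" where
  "Om_holder \<alpha> f \<longleftrightarrow> (\<exists>C. \<forall>x y. \<bar>f x - f y\<bar> \<le> C * dOm x y powr \<alpha>)"

definition Om_open :: "(nat \<Rightarrow> 'a::metric_space) set \<Rightarrow> bool" where
  "Om_open U \<longleftrightarrow> (\<forall>x\<in>U. \<exists>e>0. \<forall>y. dOm x y < e \<longrightarrow> y \<in> U)"

definition Om_borel :: "(nat \<Rightarrow> 'a::metric_space) measure" where
  "Om_borel = sigma UNIV {U. Om_open U}"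

definition ruelle :: "'a measure \<Rightarrow> ((nat \<Rightarrow> 'a) \<Rightarrow> real) \<Rightarrow> ((nat \<Rightarrow> 'a) \<Rightarrow> real)
    \<Rightarrow> (nat \<Rightarrow> 'a) \<Rightarrow> real" where
  "ruelle \<mu> f \<phi> x = (\<integral>a. exp (f (cons_seq a x)) * \<phi> (cons_seq a x) \<partial>\<mu>)"

definition birkhoff :: "nat \<Rightarrow> ((nat \<Rightarrow> 'a) \<Rightarrow> real) \<Rightarrow> (nat \<Rightarrow> 'a) \<Rightarrow> real" where
  "birkhoff n \<phi> x = (\<Sum>j<n. \<phi> ((shift ^^ j) x))"

definition supnorm :: "('b \<Rightarrow> real) \<Rightarrow> real" where
  "supnorm g = (SUP x. \<bar>g x\<bar>)"

end

theory Submission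
  imports Defs
begin

lemma compact_Om:
  assumes "compact (UNIV :: 'a::metric_space set)"
  shows "compact (UNIV :: (nat \<Rightarrow> 'a) set)"
proof -
  have "compact_space (euclidean::'a topology)" using assms by (simp add: compact_space_def)
  then have "compact_space (product_topology (\<lambda>i::nat. euclidean::'a topology) UNIV)"
    using compact_space_product_topology by blast
  then have "compact_space (euclidean :: (nat \<Rightarrow> 'a) topology)"
    by (simp add: euclidean_product_topology)
  then show ?thesis by (simp add: compact_space_def)
qed

lemma tendsto_coord:
  fixes X :: "nat \<Rightarrow> nat \<Rightarrow> 'a::metric_space"
  assumes "X \<longlonglongrightarrow> x"
  shows "(\<lambda>k. X k i) \<longlonglongrightarrow> x i"
  using continuous_on_tendsto_compose[OF continuous_on_product_coordinates[of i] assms] by simp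




lemma dist_bdd:
  assumes "compact (UNIV :: 'a::metric_space set)"
  obtains D where "\<And>a b::'a. dist a b \<le> D" "D \<ge> 0"
proof -
  have "bounded (UNIV::'a set)" using assms compact_imp_bounded by blast
  then obtain e where e: "\<forall>a\<in>UNIV. \<forall>b\<in>UNIV. dist a (b::'a) \<le> e" unfolding bounded_two_points by (elim exE)
  have e0: "e \<ge> 0" using e[rule_format, of undefined undefined] by simp
  show ?thesis by (rule that[of e]) (use e e0 in auto)
qed

lemma geom_half: "summable (\<lambda>n. (1/2::real)^Suc n)" "(\<Sum>n. (1/2::real)^Suc n) = 1"
proof -
  show s: "summable (\<lambda>n. (1/2::real)^Suc n)"
    using summable_geometric[of "1/2::real"] by (simp add: summable_mult)
  have "(\<Sum>n. (1/2::real)^Suc n) = (1/2) * (\<Sum>n. (1/2::real)^n)"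
    using suminf_mult[OF summable_geometric[of "1/2::real"], of "1/2"] by simp
  also have "\<dots> = 1" using suminf_geometric[of "1/2::real"] by simp
  finally show "(\<Sum>n. (1/2::real)^Suc n) = 1" .
qed

lemma dOm_summable:
  assumes "\<And>a b::'a::metric_space. dist a b \<le> D"
  shows "summable (\<lambda>n. (1/2)^Suc n * dist (x n) (y n :: 'a))"
proof (rule summable_comparison_test'[of "\<lambda>n. D * (1/2)^Suc n"])
  show "summable (\<lambda>n. D * (1/2::real)^Suc n)" using geom_half(1) summable_mult by blast
  fix n show "norm ((1/2)^Suc n * dist (x n) (y n)) \<le> D * (1/2::real)^Suc n"
    using assms[of "x n" "y n"] by (simp add: mult.commute)
qed

lemma dOm_nonneg: assumes "\<And>a b::'a::metric_space. dist a b \<le> D"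
  shows "0 \<le> dOm x (y :: nat \<Rightarrow> 'a)"
  unfolding dOm_def by (rule suminf_nonneg[OF dOm_summable[OF assms]]) simp

lemma dOm_le: assumes "\<And>a b::'a::metric_space. dist a b \<le> D"
  shows "dOm x (y :: nat \<Rightarrow> 'a) \<le> D"
proof -
  have "dOm x y \<le> (\<Sum>n. D * (1/2)^Suc n)" unfolding dOm_def
    apply (rule suminf_le[OF _ dOm_summable[OF assms]])
    using assms geom_half(1) summable_mult by (auto simp: mult.commute)
  also have "\<dots> = D" using suminf_mult[OF geom_half(1), of D] geom_half(2) by simp
  finally show ?thesis .
qed

lemma dOm_sym: "dOm x y = dOm y x"
  unfolding dOm_def by (simp add: dist_commute)

lemma dOm_self: "dOm x x = 0"
  unfolding dOm_def by simp

lemma dOm_triangle: assumes "\<And>a b::'a::metric_space. dist a b \<le> D"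
  shows "dOm x (y :: nat \<Rightarrow> 'a) \<le> dOm x z + dOm z y"
proof -
  have "dOm x z + dOm z y = (\<Sum>n. (1/2)^Suc n * dist (x n) (z n) + (1/2)^Suc n * dist (z n) (y n))"
    unfolding dOm_def by (rule suminf_add[OF dOm_summable[OF assms] dOm_summable[OF assms]])
  moreover have "dOm x y \<le> (\<Sum>n. (1/2)^Suc n * dist (x n) (z n) + (1/2)^Suc n * dist (z n) (y n))"
    unfolding dOm_def
  proof (rule suminf_le[OF _ dOm_summable[OF assms]])
    show "summable (\<lambda>n. (1/2)^Suc n * dist (x n) (z n) + (1/2)^Suc n * dist (z n) (y n))"
      by (intro summable_add dOm_summable[OF assms])
    fix n show "(1/2)^Suc n * dist (x n) (y n) \<le> (1/2)^Suc n * dist (x n) (z n) + (1/2)^Suc n * dist (z n) (y n)"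
      using dist_triangle[of "x n" "y n" "z n"] by (simp add: distrib_left[symmetric])
  qed
  ultimately show ?thesis by simp
qed

lemma dOm_coord: assumes "\<And>a b::'a::metric_space. dist a b \<le> D"
  shows "dist (x n) (y n :: 'a) \<le> 2^Suc n * dOm x y"
proof -
  let ?f = "\<lambda>n. (1/2)^Suc n * dist (x n) (y n)"
  have "?f n \<le> sum ?f {..<Suc n}" by (rule member_le_sum) auto
  also have "\<dots> \<le> suminf ?f" by (rule sum_le_suminf[OF dOm_summable[OF assms]]) auto
  finally have "(1/2)^Suc n * dist (x n) (y n) \<le> dOm x y" by (simp add: dOm_def)
  then have "2^Suc n * ((1/2)^Suc n * dist (x n) (y n)) \<le> 2^Suc n * dOm x y"
    by (intro mult_left_mono) auto
  then show ?thesis by (simp add: power_one_over)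
qed

lemma dOm_cons_same: assumes "\<And>a b::'a::metric_space. dist a b \<le> D"
  shows "dOm (cons_seq a x) (cons_seq a (y :: nat \<Rightarrow> 'a)) = dOm x y / 2"
proof -
  let ?f = "\<lambda>n. (1/2)^Suc n * dist (cons_seq a x n) (cons_seq a y n)"
  have "(\<Sum>n. ?f (Suc n)) = suminf ?f - ?f 0"
    by (rule suminf_split_head[OF dOm_summable[OF assms]])
  moreover have "?f 0 = 0" by (simp add: cons_seq_def)
  moreover have "(\<Sum>n. ?f (Suc n)) = (\<Sum>n. (1/2) * ((1/2)^Suc n * dist (x n) (y n)))"
    by (simp add: cons_seq_def mult.assoc)
  moreover have "\<dots> = (1/2) * dOm x y" unfolding dOm_def
    by (rule suminf_mult[OF dOm_summable[OF assms]])
  ultimately show ?thesis by (simp add: dOm_def)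
qed

lemma dOm_cons_pt: assumes "\<And>a b::'a::metric_space. dist a b \<le> D"
  shows "dOm (cons_seq a x) (cons_seq b (x :: nat \<Rightarrow> 'a)) = dist a b / 2"
proof -
  let ?f = "\<lambda>n. (1/2)^Suc n * dist (cons_seq a x n) (cons_seq b x n)"
  have "(\<Sum>n. ?f (Suc n)) = suminf ?f - ?f 0"
    by (rule suminf_split_head[OF dOm_summable[OF assms]])
  moreover have "(\<Sum>n. ?f (Suc n)) = 0" by (simp add: cons_seq_def)
  ultimately show ?thesis by (simp add: dOm_def cons_seq_def)
qed

lemma dOm_shift: assumes "\<And>a b::'a::metric_space. dist a b \<le> D"
  shows "dOm (shift x) (shift (y :: nat \<Rightarrow> 'a)) \<le> 2 * dOm x y"
proof -
  let ?f = "\<lambda>n. (1/2)^Suc n * dist (x n) (y n)"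
  have 1: "(\<Sum>n. ?f (Suc n)) = dOm x y - ?f 0" unfolding dOm_def
    by (rule suminf_split_head[OF dOm_summable[OF assms]])
  have "(\<Sum>n. ?f (Suc n)) = (\<Sum>n. (1/2) * ((1/2)^Suc n * dist (shift x n) (shift y n)))"
    by (simp add: shift_def mult.assoc)
  also have "\<dots> = (1/2) * dOm (shift x) (shift y)" unfolding dOm_def
    by (rule suminf_mult[OF dOm_summable[OF assms]])
  finally have 2: "(\<Sum>n. ?f (Suc n)) = (1/2) * dOm (shift x) (shift y)" .
  have "?f 0 \<ge> 0" by simp
  with 1 2 show ?thesis by linarith
qed

lemma dOm_tendsto: assumes "\<And>a b::'a::metric_space. dist a b \<le> D"
  and "\<And>i. (\<lambda>k. X k i) \<longlonglongrightarrow> (x i :: 'a)"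
  shows "(\<lambda>k. dOm (X k) x) \<longlonglongrightarrow> 0"
proof -
  have "((\<lambda>k. \<Sum>i. (1/2)^Suc i * dist (X k i) (x i)) \<longlongrightarrow> (\<Sum>i. (0::real))) sequentially"
  proof (rule tannerys_theorem[where M="\<lambda>i. D * (1/2)^Suc i", THEN conjunct2, THEN conjunct2])
    fix i
    have "(\<lambda>k. dist (X k i) (x i)) \<longlonglongrightarrow> dist (x i) (x i)"
      by (intro tendsto_intros assms(2))
    then show "(\<lambda>k. (1/2)^Suc i * dist (X k i) (x i)) \<longlonglongrightarrow> 0"
      using tendsto_mult_right_zero by fastforce
  next
    show "\<forall>\<^sub>F (i, k) in at_top \<times>\<^sub>F sequentially. norm ((1/2)^Suc i * dist (X k i) (x i)) \<le> D * (1/2)^Suc i"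
      by (intro always_eventually) (auto simp: assms(1) mult.commute)
    show "summable (\<lambda>i. D * (1/2::real)^Suc i)" using geom_half(1) summable_mult by blast
  qed simp
  then show ?thesis by (simp add: dOm_def)
qed




definition ucb :: "((nat \<Rightarrow> 'a::metric_space) \<Rightarrow> real) \<Rightarrow> bool" where
  "ucb g \<longleftrightarrow> (\<exists>B. \<forall>x. \<bar>g x\<bar> \<le> B) \<and> (\<forall>e>0. \<exists>d>0. \<forall>x y. dOm x y < d \<longrightarrow> \<bar>g x - g y\<bar> < e)"

lemma Om_cont_seq:
  assumes "Om_cont g" "(\<lambda>k. dOm (X k) x) \<longlonglongrightarrow> 0"
  shows "(\<lambda>k. g (X k)) \<longlonglongrightarrow> g x"
proof (rule LIMSEQ_I)
  fix r :: real assume r: "r > 0"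
  obtain d where d: "d > 0" "\<And>y. dOm x y < d \<Longrightarrow> \<bar>g y - g x\<bar> < r"
    using assms(1) r unfolding Om_cont_def by blast
  obtain no where "\<forall>n\<ge>no. norm (dOm (X n) x - 0) < d" using LIMSEQ_D[OF assms(2) d(1)] by blast
  then show "\<exists>no. \<forall>n\<ge>no. norm (g (X n) - g x) < r"
    using d(2) dOm_sym by (metis real_norm_def diff_zero abs_less_iff)
qed

lemma Om_cont_continuous:
  assumes cpt: "compact (UNIV :: 'a::metric_space set)" and g: "Om_cont (g :: (nat \<Rightarrow> 'a) \<Rightarrow> real)"
  shows "continuous_on UNIV g"
proof (rule continuous_on_sequentiallyI)
  obtain D where D: "\<And>a b::'a. dist a b \<le> D" using dist_bdd[OF cpt] by blast
  fix u a assume "u \<longlonglongrightarrow> (a :: nat \<Rightarrow> 'a)"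
  then have "\<And>i. (\<lambda>k. u k i) \<longlonglongrightarrow> a i" using tendsto_coord by blast
  then have "(\<lambda>k. dOm (u k) a) \<longlonglongrightarrow> 0" using dOm_tendsto[OF D] by blast
  then show "(\<lambda>n. g (u n)) \<longlonglongrightarrow> g a" using Om_cont_seq[OF g] by blast
qed

lemma Om_cont_min:
  assumes cpt: "compact (UNIV :: 'a::metric_space set)" and g: "Om_cont (g :: (nat \<Rightarrow> 'a) \<Rightarrow> real)"
  obtains x0 where "\<And>x. g x0 \<le> g x"
  using continuous_attains_inf[OF compact_Om[OF cpt] _ Om_cont_continuous[OF cpt g]] by auto

lemma Om_cont_bdd:
  assumes cpt: "compact (UNIV :: 'a::metric_space set)" and g: "Om_cont (g :: (nat \<Rightarrow> 'a) \<Rightarrow> real)"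
  shows "\<exists>B. \<forall>x. \<bar>g x\<bar> \<le> B"
proof -
  have "compact (range g)"
    using compact_continuous_image[OF Om_cont_continuous[OF cpt g] compact_Om[OF cpt]] .
  then have "bounded (range g)" by (rule compact_imp_bounded)
  then show ?thesis unfolding bounded_iff by auto
qed

lemma Om_cont_unif:
  assumes cpt: "compact (UNIV :: 'a::metric_space set)" and g: "Om_cont (g :: (nat \<Rightarrow> 'a) \<Rightarrow> real)"
  shows "\<forall>e>0. \<exists>d>0. \<forall>x y. dOm x y < d \<longrightarrow> \<bar>g x - g y\<bar> < e"
proof (rule ccontr)
  obtain D where D: "\<And>a b::'a. dist a b \<le> D" using dist_bdd[OF cpt] by blast
  assume "\<not> ?thesis"
  then obtain e where e: "e > 0" "\<And>d. d > 0 \<Longrightarrow> \<exists>x y. dOm x y < d \<and> \<bar>g x - g y\<bar> \<ge> e"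
    by (metis not_less)
  have "\<forall>k. \<exists>x y. dOm x y < 1 / (Suc k) \<and> \<bar>g x - g y\<bar> \<ge> e"
    using e(2) by simp
  then obtain X Y where XY: "\<And>k. dOm (X k) (Y k) < 1 / (Suc k)" "\<And>k. \<bar>g (X k) - g (Y k)\<bar> \<ge> e"
    by metis
  have "seq_compact (UNIV :: (nat \<Rightarrow> 'a) set)"
    using compact_imp_seq_compact[OF compact_Om[OF cpt]] .
  then obtain l r where r: "strict_mono (r :: nat \<Rightarrow> nat)" "(X \<circ> r) \<longlonglongrightarrow> l"
    using seq_compactE by blast
  have "\<And>i. (\<lambda>k. (X \<circ> r) k i) \<longlonglongrightarrow> l i" using tendsto_coord[OF r(2)] by blast
  then have X0: "(\<lambda>k. dOm ((X \<circ> r) k) l) \<longlonglongrightarrow> 0" using dOm_tendsto[OF D] by blast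
  have inv0: "(\<lambda>k. 1 / real (Suc (r k))) \<longlonglongrightarrow> 0"
  proof -
    have "(\<lambda>k. 1 / real (Suc k)) \<longlonglongrightarrow> 0" using LIMSEQ_Suc[OF lim_const_over_n[of 1]] by simp
    then show ?thesis using LIMSEQ_subseq_LIMSEQ[OF _ r(1)] by (simp add: o_def)
  qed
  have Y0: "(\<lambda>k. dOm (Y (r k)) l) \<longlonglongrightarrow> 0"
  proof (rule tendsto_sandwich[of "\<lambda>_. 0" _ _ "\<lambda>k. 1 / real (Suc (r k)) + dOm ((X \<circ> r) k) l"])
    show "\<forall>\<^sub>F n in sequentially. 0 \<le> dOm (Y (r n)) l" using dOm_nonneg[OF D] by simp
    show "\<forall>\<^sub>F n in sequentially. dOm (Y (r n)) l \<le> 1 / real (Suc (r n)) + dOm ((X \<circ> r) n) l"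
    proof (intro always_eventually allI)
      fix n
      have "dOm (Y (r n)) l \<le> dOm (Y (r n)) (X (r n)) + dOm (X (r n)) l" by (rule dOm_triangle[OF D])
      then show "dOm (Y (r n)) l \<le> 1 / real (Suc (r n)) + dOm ((X \<circ> r) n) l"
        using XY(1)[of "r n"] dOm_sym[of "Y (r n)"] by simp
    qed
    show "(\<lambda>k. 1 / real (Suc (r k)) + dOm ((X \<circ> r) k) l) \<longlonglongrightarrow> 0"
      using tendsto_add[OF inv0 X0] by simp
  qed simp
  have "(\<lambda>k. g ((X \<circ> r) k) - g (Y (r k))) \<longlonglongrightarrow> g l - g l"
    by (intro tendsto_diff Om_cont_seq[OF g] X0 Y0)
  then have "(\<lambda>k. \<bar>g ((X \<circ> r) k) - g (Y (r k))\<bar>) \<longlonglongrightarrow> 0"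
    using tendsto_rabs_zero by fastforce
  moreover have "\<forall>k. \<bar>g ((X \<circ> r) k) - g (Y (r k))\<bar> \<ge> e" using XY(2) by simp
  ultimately have "e \<le> 0"
    using Lim_bounded2[of _ 0 0 e] by (metis (no_types, lifting) LIMSEQ_le_const)
  with e show False by simp
qed

lemma Om_cont_ucb:
  assumes cpt: "compact (UNIV :: 'a::metric_space set)" and g: "Om_cont (g :: (nat \<Rightarrow> 'a) \<Rightarrow> real)"
  shows "ucb g"
  unfolding ucb_def using Om_cont_bdd[OF cpt g] Om_cont_unif[OF cpt g] by blast

lemma ucb_Om_cont: assumes "ucb g" shows "Om_cont g"
  unfolding Om_cont_def
proof (intro allI impI)
  fix x and e :: real assume "e > 0"
  then obtain d where "d > 0" "\<forall>x y. dOm x y < d \<longrightarrow> \<bar>g x - g y\<bar> < e" using assms unfolding ucb_def by blast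
  then show "\<exists>d>0. \<forall>y. dOm x y < d \<longrightarrow> \<bar>g y - g x\<bar> < e" by (metis abs_minus_commute)
qed




lemma ucb_const: "ucb (\<lambda>_. c)"
  unfolding ucb_def by auto

lemma ucb_bound: assumes "ucb g" obtains B where "B \<ge> 0" "\<And>x. \<bar>g x\<bar> \<le> B"
proof -
  obtain B where "\<And>x. \<bar>g x\<bar> \<le> B" using assms unfolding ucb_def by blast
  then have "\<And>x. \<bar>g x\<bar> \<le> max B 0" by (meson max.cobounded1 order_trans)
  then show ?thesis using that[of "max B 0"] by simp
qed

lemma ucb_unif: assumes "ucb g" "e > 0" obtains d where "d > 0" "\<And>x y. dOm x y < d \<Longrightarrow> \<bar>g x - g y\<bar> < e"
  using assms unfolding ucb_def by blast

lemma ucb_add: assumes "ucb g" "ucb h" shows "ucb (\<lambda>x. g x + h x)"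
proof -
  obtain B1 where B1: "\<And>x. \<bar>g x\<bar> \<le> B1" using ucb_bound[OF assms(1)] by blast
  obtain B2 where B2: "\<And>x. \<bar>h x\<bar> \<le> B2" using ucb_bound[OF assms(2)] by blast
  have b: "\<forall>x. \<bar>g x + h x\<bar> \<le> B1 + B2"
  proof
    fix x show "\<bar>g x + h x\<bar> \<le> B1 + B2" using abs_triangle_ineq[of "g x" "h x"] B1[of x] B2[of x] by linarith
  qed
  have "\<exists>d>0. \<forall>x y. dOm x y < d \<longrightarrow> \<bar>(g x + h x) - (g y + h y)\<bar> < e" if e: "e > 0" for e
  proof -
    obtain d1 where d1: "d1 > 0" "\<And>x y. dOm x y < d1 \<Longrightarrow> \<bar>g x - g y\<bar> < e/2"
      using ucb_unif[OF assms(1), of "e/2"] e by auto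
    obtain d2 where d2: "d2 > 0" "\<And>x y. dOm x y < d2 \<Longrightarrow> \<bar>h x - h y\<bar> < e/2"
      using ucb_unif[OF assms(2), of "e/2"] e by auto
    have "\<bar>(g x + h x) - (g y + h y)\<bar> < e" if "dOm x y < min d1 d2" for x y
    proof -
      have "\<bar>g x - g y\<bar> < e/2" "\<bar>h x - h y\<bar> < e/2" using d1(2) d2(2) that by auto
      moreover have "\<bar>(g x - g y) + (h x - h y)\<bar> \<le> \<bar>g x - g y\<bar> + \<bar>h x - h y\<bar>" by (rule abs_triangle_ineq)
      ultimately show ?thesis by (simp add: algebra_simps)
    qed
    then show ?thesis using d1(1) d2(1) by (intro exI[of _ "min d1 d2"]) auto
  qed
  then show ?thesis unfolding ucb_def using b by blast
qed

lemma ucb_scale: assumes "ucb g" shows "ucb (\<lambda>x. c * g x)"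
proof -
  obtain B where "\<And>x. \<bar>g x\<bar> \<le> B" using ucb_bound[OF assms(1)] by blast
  then have b: "\<forall>x. \<bar>c * g x\<bar> \<le> \<bar>c\<bar> * B" by (simp add: abs_mult mult_left_mono)
  have "\<exists>d>0. \<forall>x y. dOm x y < d \<longrightarrow> \<bar>c * g x - c * g y\<bar> < e" if e: "e > 0" for e
  proof -
    obtain d1 where d1: "d1 > 0" "\<And>x y. dOm x y < d1 \<Longrightarrow> \<bar>g x - g y\<bar> < e/(\<bar>c\<bar>+1)"
      using ucb_unif[OF assms(1), of "e/(\<bar>c\<bar>+1)"] e by auto
    have "\<bar>c * g x - c * g y\<bar> < e" if "dOm x y < d1" for x y
    proof -
      have "\<bar>c * g x - c * g y\<bar> = \<bar>c\<bar> * \<bar>g x - g y\<bar>" by (simp add: abs_mult right_diff_distrib[symmetric])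
      also have "\<dots> \<le> (\<bar>c\<bar>+1) * \<bar>g x - g y\<bar>" by (simp add: mult_right_mono)
      also have "\<dots> < (\<bar>c\<bar>+1) * (e/(\<bar>c\<bar>+1))" using d1(2)[OF that]
        by (intro mult_strict_left_mono) auto
      also have "\<dots> = e" by simp
      finally show ?thesis .
    qed
    then show ?thesis using d1(1) by blast
  qed
  then show ?thesis unfolding ucb_def using b by blast
qed

lemma ucb_minus: assumes "ucb g" "ucb h" shows "ucb (\<lambda>x. g x - h x)"
  using ucb_add[OF assms(1) ucb_scale[OF assms(2), of "-1"]] by simp

lemma ucb_mult: assumes "ucb g" "ucb h" shows "ucb (\<lambda>x. g x * h x)"
proof -
  obtain B1 where B1: "B1 \<ge> 0" "\<And>x. \<bar>g x\<bar> \<le> B1" using ucb_bound[OF assms(1)] by blast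
  obtain B2 where B2: "B2 \<ge> 0" "\<And>x. \<bar>h x\<bar> \<le> B2" using ucb_bound[OF assms(2)] by blast
  have b: "\<forall>x. \<bar>g x * h x\<bar> \<le> B1 * B2" using B1 B2 by (simp add: abs_mult mult_mono)
  have "\<exists>d>0. \<forall>x y. dOm x y < d \<longrightarrow> \<bar>g x * h x - g y * h y\<bar> < e" if e: "e > 0" for e
  proof -
    define e' where "e' = e / (B1 + B2 + 1)"
    have e': "e' > 0" using e B1 B2 by (simp add: e'_def)
    obtain d1 where d1: "d1 > 0" "\<And>x y. dOm x y < d1 \<Longrightarrow> \<bar>g x - g y\<bar> < e'"
      using ucb_unif[OF assms(1) e'] by auto
    obtain d2 where d2: "d2 > 0" "\<And>x y. dOm x y < d2 \<Longrightarrow> \<bar>h x - h y\<bar> < e'"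
      using ucb_unif[OF assms(2) e'] by auto
    have "\<bar>g x * h x - g y * h y\<bar> < e" if "dOm x y < min d1 d2" for x y
    proof -
      have "g x * h x - g y * h y = g x * (h x - h y) + h y * (g x - g y)" by (simp add: algebra_simps)
      then have "\<bar>g x * h x - g y * h y\<bar> \<le> \<bar>g x\<bar> * \<bar>h x - h y\<bar> + \<bar>h y\<bar> * \<bar>g x - g y\<bar>"
        by (simp add: abs_mult[symmetric] abs_triangle_ineq)
      also have "\<dots> \<le> B1 * e' + B2 * e'"
        using d1(2)[of x y] d2(2)[of x y] that B1 B2
        by (intro add_mono mult_mono) auto
      also have "\<dots> < e"
      proof -
        have "(B1 + B2) / (B1 + B2 + 1) < 1" using B1 B2 by simp
        then have "e * ((B1 + B2) / (B1 + B2 + 1)) < e * 1" using e by (intro mult_strict_left_mono) auto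
        moreover have "B1 * e' + B2 * e' = e * ((B1 + B2) / (B1 + B2 + 1))"
        proof -
          have "B1 * e' + B2 * e' = (B1 + B2) * e'" by (simp add: distrib_right)
          also have "\<dots> = e * ((B1 + B2) / (B1 + B2 + 1))" unfolding e'_def by simp
          finally show ?thesis .
        qed
        ultimately show ?thesis by simp
      qed
      finally show ?thesis .
    qed
    then show ?thesis using d1(1) d2(1) by (intro exI[of _ "min d1 d2"]) auto
  qed
  then show ?thesis unfolding ucb_def using b by blast
qed

lemma ucb_sum: assumes "finite I" "\<And>i. i \<in> I \<Longrightarrow> ucb (g i)" shows "ucb (\<lambda>x. \<Sum>i\<in>I. g i x)"
  using assms by (induction I rule: finite_induct) (auto intro: ucb_add ucb_const)

lemma ucb_comp: assumes "continuous_on UNIV F" "ucb g" shows "ucb (\<lambda>x. F (g x))"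
proof -
  obtain B where B: "B \<ge> 0" "\<And>x. \<bar>g x\<bar> \<le> B" using ucb_bound[OF assms(2)] by blast
  have cpt: "compact {-B..B}" by simp
  have uc: "uniformly_continuous_on {-B..B} F"
    using compact_uniformly_continuous[OF continuous_on_subset[OF assms(1)] cpt] by simp
  have "compact (F ` {-B..B})" using compact_continuous_image[OF continuous_on_subset[OF assms(1)] cpt] by simp
  then obtain C where C: "\<forall>y\<in>F ` {-B..B}. norm y \<le> C" using compact_imp_bounded bounded_iff by blast
  have b: "\<forall>x. \<bar>F (g x)\<bar> \<le> C"
  proof
    fix x
    have "g x \<in> {-B..B}" using B(2)[of x] by (simp add: abs_le_iff)
    then show "\<bar>F (g x)\<bar> \<le> C" using C by auto
  qed
  have "\<exists>d>0. \<forall>x y. dOm x y < d \<longrightarrow> \<bar>F (g x) - F (g y)\<bar> < e" if e: "e > 0" for e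
  proof -
    obtain d' where d': "d' > 0" "\<And>s t. s \<in> {-B..B} \<Longrightarrow> t \<in> {-B..B} \<Longrightarrow> dist t s < d' \<Longrightarrow> dist (F t) (F s) < e"
      using uc e unfolding uniformly_continuous_on_def by blast
    obtain d where d: "d > 0" "\<And>x y. dOm x y < d \<Longrightarrow> \<bar>g x - g y\<bar> < d'"
      using ucb_unif[OF assms(2) d'(1)] by auto
    have "\<bar>F (g x) - F (g y)\<bar> < e" if "dOm x y < d" for x y
      using d'(2)[of "g y" "g x"] d(2)[OF that] B(2)[of x] B(2)[of y] by (auto simp: dist_real_def abs_le_iff)
    then show ?thesis using d(1) by blast
  qed
  then show ?thesis unfolding ucb_def using b by blast
qed

lemma ucb_shift: assumes D: "\<And>a b::'a::metric_space. dist a b \<le> D" and g: "ucb (g :: (nat \<Rightarrow> 'a) \<Rightarrow> real)"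
  shows "ucb (\<lambda>x. g (shift x))"
proof -
  have b: "\<exists>B. \<forall>x. \<bar>g (shift x)\<bar> \<le> B" using g unfolding ucb_def by blast
  have "\<exists>d>0. \<forall>x y. dOm x y < d \<longrightarrow> \<bar>g (shift x) - g (shift y)\<bar> < e" if e: "e > 0" for e
  proof -
    obtain d where d: "d > 0" "\<And>x y. dOm x y < d \<Longrightarrow> \<bar>g x - g y\<bar> < e" using ucb_unif[OF g e] by auto
    have "\<bar>g (shift x) - g (shift y)\<bar> < e" if "dOm x y < d/2" for x y
      using d(2)[of "shift x" "shift y"] dOm_shift[OF D, of x y] that by simp
    then show ?thesis using d(1) by (intro exI[of _ "d/2"]) auto
  qed
  then show ?thesis unfolding ucb_def using b by blast
qed

lemma ucb_shiftpow: assumes D: "\<And>a b::'a::metric_space. dist a b \<le> D" and g: "ucb (g :: (nat \<Rightarrow> 'a) \<Rightarrow> real)"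
  shows "ucb (\<lambda>x. g ((shift ^^ j) x))"
  using g
proof (induction j arbitrary: g)
  case 0 then show ?case by simp
next
  case (Suc j)
  have "ucb (\<lambda>x. g (shift x))" using ucb_shift[OF D Suc.prems] .
  from Suc.IH[OF this] show ?case by (simp add: funpow_Suc_right)
qed

lemma ucb_holder:
  assumes D: "\<And>a b::'a::metric_space. dist a b \<le> D" and h: "Om_holder \<alpha> (f :: (nat \<Rightarrow> 'a) \<Rightarrow> real)"
    and a: "\<alpha> > 0"
  shows "ucb f"
proof -
  obtain C0 where C0: "\<And>x y. \<bar>f x - f y\<bar> \<le> C0 * dOm x y powr \<alpha>" using h unfolding Om_holder_def by blast
  define C where "C = max C0 1"
  have C: "\<And>x y. \<bar>f x - f y\<bar> \<le> C * dOm x y powr \<alpha>" "C > 0"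
  proof -
    fix x y :: "nat \<Rightarrow> 'a"
    have "C0 * dOm x y powr \<alpha> \<le> C * dOm x y powr \<alpha>" unfolding C_def by (intro mult_right_mono) auto
    then show "\<bar>f x - f y\<bar> \<le> C * dOm x y powr \<alpha>" using C0[of x y] by linarith
  qed (simp add: C_def)
  fix x0 :: "nat \<Rightarrow> 'a"
  have b: "\<forall>x. \<bar>f x\<bar> \<le> \<bar>f x0\<bar> + C * D powr \<alpha>"
  proof
    fix x
    have "dOm x x0 powr \<alpha> \<le> D powr \<alpha>"
      by (intro powr_mono2) (use a dOm_nonneg[OF D] dOm_le[OF D] in auto)
    then have "C * dOm x x0 powr \<alpha> \<le> C * D powr \<alpha>" using C(2) by simp
    then show "\<bar>f x\<bar> \<le> \<bar>f x0\<bar> + C * D powr \<alpha>" using C(1)[of x x0] by linarith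
  qed
  have "\<exists>d>0. \<forall>x y. dOm x y < d \<longrightarrow> \<bar>f x - f y\<bar> < e" if e: "e > 0" for e
  proof -
    define d where "d = (e / C) powr (1/\<alpha>)"
    have d: "d > 0" using e C(2) by (simp add: d_def)
    have "\<bar>f x - f y\<bar> < e" if "dOm x y < d" for x y
    proof -
      have "dOm x y powr \<alpha> < d powr \<alpha>"
        by (rule powr_less_mono2) (use a dOm_nonneg[OF D] that in auto)
      also have "d powr \<alpha> = e / C" unfolding d_def using a e C(2) by (simp add: powr_powr)
      finally have "C * dOm x y powr \<alpha> < e" using C(2) by (simp add: field_simps)
      then show ?thesis using C(1)[of x y] by linarith
    qed
    then show ?thesis using d by blast
  qed
  then have u: "\<forall>e>0. \<exists>d>0. \<forall>x y. dOm x y < d \<longrightarrow> \<bar>f x - f y\<bar> < e" by blast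
  show ?thesis unfolding ucb_def
    by (rule conjI[OF exI[of _ "\<bar>f x0\<bar> + C * D powr \<alpha>"] u]) (rule b)
qed




locale RS = prob_space M for M :: "'a::metric_space measure" +
  fixes f :: "(nat \<Rightarrow> 'a) \<Rightarrow> real" and D :: real
  assumes S: "sets M = sets borel" and F: "ucb f" and Dd: "\<And>a b::'a. dist a b \<le> D"
begin

abbreviation L where "L \<equiv> ruelle M f"

lemma cont_cons: assumes "ucb (G :: (nat \<Rightarrow> 'a) \<Rightarrow> real)" shows "continuous_on UNIV (\<lambda>a. G (cons_seq a x))"
  unfolding continuous_on_iff
proof (intro ballI allI impI)
  fix a :: 'a and e :: real assume e: "e > 0"
  obtain d where d: "d > 0" "\<And>x y. dOm x y < d \<Longrightarrow> \<bar>G x - G y\<bar> < e" using ucb_unif[OF assms e] by auto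
  have "dist (G (cons_seq b x)) (G (cons_seq a x)) < e" if "dist b a < 2 * d" for b :: 'a
    using d(2)[of "cons_seq b x" "cons_seq a x"] dOm_cons_pt[OF Dd, of b x a] that by (simp add: dist_real_def)
  then show "\<exists>d>0. \<forall>b\<in>UNIV. dist b a < d \<longrightarrow> dist (G (cons_seq b x)) (G (cons_seq a x)) < e"
    using d(1) by (intro exI[of _ "2*d"]) auto
qed

lemma meas: assumes "ucb G" shows "(\<lambda>a. G (cons_seq a x)) \<in> borel_measurable M"
  using borel_measurable_continuous_onI[OF cont_cons[OF assms]] measurable_cong_sets[OF S refl] by blast

lemma ucb_expf: "ucb (\<lambda>y. exp (f y))"
  by (rule ucb_comp[OF _ F]) (intro continuous_intros)

lemma intg: assumes "ucb g" shows "integrable M (\<lambda>a. exp (f (cons_seq a x)) * g (cons_seq a x))"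
proof -
  have G: "ucb (\<lambda>y. exp (f y) * g y)" by (rule ucb_mult[OF ucb_expf assms])
  obtain B where B: "\<And>y. \<bar>exp (f y) * g y\<bar> \<le> B" using ucb_bound[OF G] by blast
  show ?thesis
    by (rule integrable_const_bound[where B=B]) (use B meas[OF G] in auto)
qed

lemma int_abs_le: assumes "integrable M (F :: 'a \<Rightarrow> real)" "\<And>a. \<bar>F a\<bar> \<le> B" shows "\<bar>integral\<^sup>L M F\<bar> \<le> B"
proof -
  have "integral\<^sup>L M F \<le> integral\<^sup>L M (\<lambda>_. B)"
    by (rule Bochner_Integration.integral_mono[OF assms(1)]) (use assms(2) in \<open>auto simp: abs_le_iff\<close>)
  moreover have "integral\<^sup>L M (\<lambda>_. -B) \<le> integral\<^sup>L M F"
  proof (rule Bochner_Integration.integral_mono[OF _ assms(1)])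
    fix a show "- B \<le> F a" using assms(2)[of a] unfolding abs_le_iff by linarith
  qed simp
  ultimately show ?thesis using prob_space by (simp add: abs_le_iff)
qed

lemma ucb_L: assumes "ucb g" shows "ucb (L g)"
proof -
  have G: "ucb (\<lambda>y. exp (f y) * g y)" by (rule ucb_mult[OF ucb_expf assms])
  obtain B where B: "\<And>y. \<bar>exp (f y) * g y\<bar> \<le> B" using ucb_bound[OF G] by blast
  have b: "\<forall>x. \<bar>L g x\<bar> \<le> B" unfolding ruelle_def using int_abs_le[OF intg[OF assms]] B by blast
  have "\<exists>d>0. \<forall>x y. dOm x y < d \<longrightarrow> \<bar>L g x - L g y\<bar> < e" if e: "e > 0" for e
  proof -
    obtain d where d: "d > 0" "\<And>x y. dOm x y < d \<Longrightarrow> \<bar>exp (f x) * g x - exp (f y) * g y\<bar> < e/2"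
      using ucb_unif[OF G, of "e/2"] e by auto
    have "\<bar>L g x - L g y\<bar> < e" if xy: "dOm x y < 2*d" for x y
    proof -
      have "L g x - L g y = integral\<^sup>L M (\<lambda>a. exp (f (cons_seq a x)) * g (cons_seq a x) - exp (f (cons_seq a y)) * g (cons_seq a y))"
        unfolding ruelle_def by (rule Bochner_Integration.integral_diff[OF intg[OF assms] intg[OF assms], symmetric])
      also have "\<bar>\<dots>\<bar> \<le> e/2"
      proof (rule int_abs_le)
        show "integrable M (\<lambda>a. exp (f (cons_seq a x)) * g (cons_seq a x) - exp (f (cons_seq a y)) * g (cons_seq a y))"
          by (intro Bochner_Integration.integrable_diff intg[OF assms])
        fix a
        show "\<bar>exp (f (cons_seq a x)) * g (cons_seq a x) - exp (f (cons_seq a y)) * g (cons_seq a y)\<bar> \<le> e/2"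
          using d(2)[of "cons_seq a x" "cons_seq a y"] dOm_cons_same[OF Dd, of a x y] xy by simp
      qed
      finally show ?thesis using e by simp
    qed
    then show ?thesis using d(1) by (intro exI[of _ "2*d"]) auto
  qed
  then show ?thesis unfolding ucb_def using b by blast
qed

lemma L_add: assumes "ucb g" "ucb h" shows "L (\<lambda>y. g y + h y) = (\<lambda>x. L g x + L h x)"
proof
  fix x
  show "L (\<lambda>y. g y + h y) x = L g x + L h x"
    unfolding ruelle_def using Bochner_Integration.integral_add[OF intg[OF assms(1)] intg[OF assms(2)], of x]
    by (simp add: distrib_left)
qed

lemma L_scale: "L (\<lambda>y. c * g y) = (\<lambda>x. c * L g x)"
proof
  fix x
  have "L (\<lambda>y. c * g y) x = integral\<^sup>L M (\<lambda>a. c * (exp (f (cons_seq a x)) * g (cons_seq a x)))"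
    unfolding ruelle_def by (simp add: ac_simps)
  also have "\<dots> = c * L g x" unfolding ruelle_def by simp
  finally show "L (\<lambda>y. c * g y) x = c * L g x" .
qed

lemma L_zero: "L (\<lambda>y. 0) = (\<lambda>x. 0)"
  using L_scale[of 0 "\<lambda>_. 0"] by simp

lemma L_sum: assumes "finite I" "\<And>i. i \<in> I \<Longrightarrow> ucb (g i)"
  shows "L (\<lambda>y. \<Sum>i\<in>I. g i y) = (\<lambda>x. \<Sum>i\<in>I. L (g i) x)"
  using assms
proof (induction I rule: finite_induct)
  case empty then show ?case using L_zero by simp
next
  case (insert i I)
  have "L (\<lambda>y. \<Sum>i\<in>insert i I. g i y) = L (\<lambda>y. g i y + (\<Sum>i\<in>I. g i y))"
    using insert.hyps by simp
  also have "\<dots> = (\<lambda>x. L (g i) x + L (\<lambda>y. \<Sum>i\<in>I. g i y) x)"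
    by (rule L_add) (use insert.prems insert.hyps in \<open>auto intro: ucb_sum\<close>)
  finally show ?case using insert by simp
qed

lemma L_mono: assumes "ucb g" "ucb h" "\<And>y. g y \<le> h y" shows "L g x \<le> L h x"
  unfolding ruelle_def
  by (rule Bochner_Integration.integral_mono[OF intg[OF assms(1)] intg[OF assms(2)]]) (simp add: assms(3))

lemma L_pull: "L (\<lambda>y. k (shift y) * \<psi> y) x = k x * L \<psi> x"
proof -
  have "L (\<lambda>y. k (shift y) * \<psi> y) x = integral\<^sup>L M (\<lambda>a. k x * (exp (f (cons_seq a x)) * \<psi> (cons_seq a x)))"
    unfolding ruelle_def by (simp add: ac_simps shift_def cons_seq_def)
  also have "\<dots> = k x * L \<psi> x" unfolding ruelle_def by simp
  finally show ?thesis .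
qed

lemma Ln_Suc: "(L ^^ Suc n) g = L ((L ^^ n) g)" by simp

lemma Ln_ucb: "ucb g \<Longrightarrow> ucb ((L ^^ n) g)"
  by (induction n) (auto intro: ucb_L)

lemma Ln_scale: "(L ^^ n) (\<lambda>y. c * g y) = (\<lambda>x. c * (L ^^ n) g x)"
  by (induction n) (auto simp: L_scale)

lemma Ln_sum: assumes "finite I" "\<And>i. i \<in> I \<Longrightarrow> ucb (g i)"
  shows "(L ^^ n) (\<lambda>y. \<Sum>i\<in>I. g i y) = (\<lambda>x. \<Sum>i\<in>I. (L ^^ n) (g i) x)"
proof (induction n)
  case 0 then show ?case by simp
next
  case (Suc n)
  have "(L ^^ Suc n) (\<lambda>y. \<Sum>i\<in>I. g i y) = L (\<lambda>x. \<Sum>i\<in>I. (L ^^ n) (g i) x)" using Suc by simp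
  also have "\<dots> = (\<lambda>x. \<Sum>i\<in>I. L ((L ^^ n) (g i)) x)"
    by (rule L_sum[OF assms(1)]) (use assms(2) Ln_ucb in blast)
  finally show ?case by simp
qed

lemma Ln_mono: assumes "ucb g" "ucb h" "\<And>y. g y \<le> h y" shows "(L ^^ n) g x \<le> (L ^^ n) h x"
  using assms(3)
proof (induction n arbitrary: x)
  case 0 then show ?case by simp
next
  case (Suc n)
  show ?case using L_mono[OF Ln_ucb[OF assms(1)] Ln_ucb[OF assms(2)]] Suc by simp
qed

lemma Ln_pull: "(L ^^ j) (\<lambda>y. k ((shift ^^ j) y) * \<psi> y) = (\<lambda>x. k x * (L ^^ j) \<psi> x)"
proof (induction j arbitrary: k)
  case 0 then show ?case by simp
next
  case (Suc j)
  have "(L ^^ Suc j) (\<lambda>y. k ((shift ^^ Suc j) y) * \<psi> y) = L ((L ^^ j) (\<lambda>y. (\<lambda>z. k (shift z)) ((shift ^^ j) y) * \<psi> y))"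
    by simp
  also have "\<dots> = L (\<lambda>x. k (shift x) * (L ^^ j) \<psi> x)" using Suc.IH[of "\<lambda>z. k (shift z)"] by simp
  also have "\<dots> = (\<lambda>x. k x * (L ^^ Suc j) \<psi> x)" using L_pull by auto
  finally show ?case .
qed

end



lemma sup_to_unif:
  assumes "\<And>n. \<exists>B. \<forall>x. \<bar>G n x\<bar> \<le> B" "(\<lambda>n. supnorm (G n)) \<longlonglongrightarrow> 0"
  shows "\<forall>e>0. \<forall>\<^sub>F n in sequentially. \<forall>x. \<bar>G n x\<bar> \<le> e"
proof (intro allI impI)
  fix e :: real assume e: "e > 0"
  have le: "\<bar>G n x\<bar> \<le> supnorm (G n)" for n x
  proof -
    obtain B where "\<forall>x. \<bar>G n x\<bar> \<le> B" using assms(1) by blast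
    then have "bdd_above (range (\<lambda>x. \<bar>G n x\<bar>))" by (auto intro: bdd_aboveI2)
    then show ?thesis unfolding supnorm_def using cSUP_upper[of x UNIV "\<lambda>x. \<bar>G n x\<bar>"] by simp
  qed
  obtain no where no: "\<forall>n\<ge>no. norm (supnorm (G n) - 0) < e" using LIMSEQ_D[OF assms(2) e] by blast
  have "\<forall>n\<ge>no. \<forall>x. \<bar>G n x\<bar> \<le> e"
  proof (intro allI impI)
    fix n x assume "n \<ge> no"
    then have "\<bar>supnorm (G n)\<bar> < e" using no by simp
    then show "\<bar>G n x\<bar> \<le> e" using le[of n x] by linarith
  qed
  then show "\<forall>\<^sub>F n in sequentially. \<forall>x. \<bar>G n x\<bar> \<le> e" using eventually_sequentially by blast
qed

lemma unif_to_sup: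
  assumes "\<forall>e>0. \<forall>\<^sub>F n in sequentially. \<forall>x. \<bar>G n x\<bar> \<le> e"
  shows "(\<lambda>n. supnorm (G n)) \<longlonglongrightarrow> 0"
proof (rule LIMSEQ_I)
  fix r :: real assume r: "r > 0"
  then have "r/2 > 0" by simp
  then have "\<forall>\<^sub>F n in sequentially. \<forall>x. \<bar>G n x\<bar> \<le> r/2" using assms by blast
  then obtain no where no: "\<And>n x. n \<ge> no \<Longrightarrow> \<bar>G n x\<bar> \<le> r/2" unfolding eventually_sequentially by blast
  have "norm (supnorm (G n) - 0) < r" if "n \<ge> no" for n
  proof -
    have bdd: "bdd_above (range (\<lambda>x. \<bar>G n x\<bar>))" by (rule bdd_aboveI2[where M="r/2"]) (rule no[OF that])
    have "supnorm (G n) \<le> r/2" unfolding supnorm_def by (rule cSUP_least) (use no[OF that] in auto)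
    moreover have "\<bar>G n undefined\<bar> \<le> supnorm (G n)" unfolding supnorm_def by (rule cSUP_upper[OF _ bdd]) simp
    ultimately show ?thesis using r by simp
  qed
  then show "\<exists>no. \<forall>n\<ge>no. norm (supnorm (G n) - 0) < r" by blast
qed

lemma cesaro:
  fixes v :: "nat \<Rightarrow> nat \<Rightarrow> 'x \<Rightarrow> real"
  assumes K: "\<And>n j x. \<bar>v n j x\<bar> \<le> K"
    and E: "\<And>e. e > 0 \<Longrightarrow> \<exists>N. \<forall>n x. card {j. j < n \<and> \<not> \<bar>v n j x\<bar> \<le> e} \<le> N"
  shows "\<forall>e>0. \<forall>\<^sub>F n in sequentially. \<forall>x. \<bar>(1 / real n) * (\<Sum>j<n. v n j x)\<bar> \<le> e"
proof (intro allI impI)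
  fix e :: real assume e: "e > 0"
  have K0: "K \<ge> 0" using K[of 0 0 undefined] by simp
  obtain N where N: "\<And>n x. card {j. j < n \<and> \<not> \<bar>v n j x\<bar> \<le> e/2} \<le> N" using E[of "e/2"] e by auto
  define n0 where "n0 = nat \<lceil>2 * N * K / e\<rceil> + 1"
  have "\<bar>(1 / real n) * (\<Sum>j<n. v n j x)\<bar> \<le> e" if n: "n \<ge> n0" for n x
  proof -
    define B where "B = {j. j < n \<and> \<not> \<bar>v n j x\<bar> \<le> e/2}"
    have Bsub: "B \<subseteq> {..<n}" unfolding B_def by auto
    have "\<bar>\<Sum>j<n. v n j x\<bar> \<le> (\<Sum>j<n. \<bar>v n j x\<bar>)" by (rule sum_abs)
    also have "\<dots> \<le> (\<Sum>j<n. (if j \<in> B then K else 0) + e/2)"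
    proof (rule sum_mono)
      fix j assume "j \<in> {..<n}"
      then show "\<bar>v n j x\<bar> \<le> (if j \<in> B then K else 0) + e/2"
        using K[of n j x] e unfolding B_def by auto
    qed
    also have "\<dots> = (\<Sum>j<n. (if j \<in> B then K else 0)) + n * (e/2)"
      by (simp add: sum.distrib)
    also have "(\<Sum>j<n. (if j \<in> B then K else 0)) = (\<Sum>j\<in>B. K)"
      using Bsub by (simp add: sum.If_cases Int_absorb1)
    also have "\<dots> = card B * K" by simp
    also have "\<dots> \<le> N * K" using N[of n x] K0 unfolding B_def by (intro mult_right_mono) auto
    finally have S: "\<bar>\<Sum>j<n. v n j x\<bar> \<le> N * K + n * (e/2)" by simp
    have npos: "real n > 0" using n unfolding n0_def by simp
    have "2 * N * K / e \<le> real n0 - 1" unfolding n0_def by (simp add: of_nat_ceiling)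
    then have "2 * N * K / e \<le> n" using n by linarith
    then have "N * K \<le> n * (e/2)" using e by (simp add: field_simps)
    with S have "\<bar>\<Sum>j<n. v n j x\<bar> \<le> n * e" by simp
    then show ?thesis using npos by (simp add: abs_mult field_simps)
  qed
  then show "\<forall>\<^sub>F n in sequentially. \<forall>x. \<bar>(1 / real n) * (\<Sum>j<n. v n j x)\<bar> \<le> e"
    using eventually_sequentially by blast
qed




context RS begin

lemma Ln_add: assumes "ucb g" "ucb h" shows "(L ^^ n) (\<lambda>y. g y + h y) = (\<lambda>x. (L ^^ n) g x + (L ^^ n) h x)"
proof (induction n)
  case 0 then show ?case by simp
next
  case (Suc n)
  have "(L ^^ Suc n) (\<lambda>y. g y + h y) = L (\<lambda>x. (L ^^ n) g x + (L ^^ n) h x)" using Suc by simp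
  also have "\<dots> = (\<lambda>x. L ((L ^^ n) g) x + L ((L ^^ n) h) x)"
    by (rule L_add[OF Ln_ucb[OF assms(1)] Ln_ucb[OF assms(2)]])
  finally show ?case by simp
qed

lemma Ln_diff: assumes "ucb g" "ucb h" shows "(L ^^ n) (\<lambda>y. g y - h y) = (\<lambda>x. (L ^^ n) g x - (L ^^ n) h x)"
proof -
  have "(L ^^ n) (\<lambda>y. g y - h y) = (L ^^ n) (\<lambda>y. g y + (-1) * h y)" by simp
  also have "\<dots> = (\<lambda>x. (L ^^ n) g x + (L ^^ n) (\<lambda>y. (-1) * h y) x)"
    by (rule Ln_add[OF assms(1) ucb_scale[OF assms(2)]])
  also have "\<dots> = (\<lambda>x. (L ^^ n) g x + (-1) * (L ^^ n) h x)" by (simp only: Ln_scale)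
  also have "\<dots> = (\<lambda>x. (L ^^ n) g x - (L ^^ n) h x)" by simp
  finally show ?thesis .
qed

lemma Ln_bound:
  assumes h: "ucb h" "\<And>x. h x \<ge> m0" "m0 > 0" "\<And>x. h x \<le> H"
    and eig: "(L ^^ n) h = (\<lambda>x. lam^n * h x)" and lam: "lam > 0"
    and psi: "ucb \<psi>" "\<And>y. \<bar>\<psi> y\<bar> \<le> B"
  shows "\<bar>(L ^^ n) \<psi> x\<bar> \<le> B / m0 * lam^n * H"
proof -
  have B0: "B \<ge> 0" using psi(2)[of undefined] by simp
  have le: "B \<le> B / m0 * h y" for y
  proof -
    have "B * m0 \<le> B * h y" using h(2)[of y] B0 by (intro mult_left_mono) auto
    then show ?thesis using h(3) by (simp add: field_simps)
  qed
  have up: "(L ^^ n) \<psi> x \<le> (L ^^ n) (\<lambda>y. B / m0 * h y) x"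
    by (rule Ln_mono[OF psi(1) ucb_scale[OF h(1)]]) (use psi(2) le in \<open>smt (verit)\<close>)
  have lo: "(L ^^ n) (\<lambda>y. (- (B / m0)) * h y) x \<le> (L ^^ n) \<psi> x"
  proof (rule Ln_mono[OF ucb_scale[OF h(1)] psi(1)])
    fix y
    have "(- (B / m0)) * h y = - (B / m0 * h y)" by simp
    moreover have "- \<psi> y \<le> B" using psi(2)[of y] by linarith
    ultimately show "(- (B / m0)) * h y \<le> \<psi> y" using le[of y] by linarith
  qed
  have hx: "B / m0 * lam^n * h x \<le> B / m0 * lam^n * H"
    using h(3) B0 lam h(4)[of x] by (intro mult_left_mono) auto
  have "0 \<le> B / m0 * lam^n * h x" using h(3) B0 lam h(2)[of x] by simp
  moreover have "(L ^^ n) (\<lambda>y. B / m0 * h y) x = B / m0 * lam^n * h x"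
    by (simp only: Ln_scale eig mult.assoc minus_mult_left)
  moreover have "(L ^^ n) (\<lambda>y. (- (B / m0)) * h y) x = - (B / m0 * lam^n * h x)"
    by (simp only: Ln_scale eig mult.assoc minus_mult_left)
  ultimately show ?thesis using up lo hx unfolding abs_le_iff by linarith
qed

end




theorem mainTheorem4:
  fixes \<mu> :: "'a::metric_space measure"
    and \<nu> :: "(nat \<Rightarrow> 'a) measure"
    and f h :: "(nat \<Rightarrow> 'a) \<Rightarrow> real"
    and \<alpha> lam :: real
  assumes M_compact: "compact (UNIV :: 'a set)"
    and mu_prob: "prob_space \<mu>"
    and mu_borel: "sets \<mu> = sets borel"
    and mu_full_support: "\<And>U. open U \<Longrightarrow> U \<noteq> {} \<Longrightarrow> emeasure \<mu> U > 0"
    and alpha: "0 < \<alpha>" "\<alpha> < 1"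
    and f_holder: "Om_holder \<alpha> f"
    and lam_pos: "lam > 0"
    and h_cont: "Om_cont h"
    and h_pos: "\<And>x. h x > 0"
    and h_eigen: "\<And>x. ruelle \<mu> f h x = lam * h x"
    and nu_prob: "prob_space \<nu>"
    and nu_borel: "sets \<nu> = sets Om_borel"
    and nu_eigen: "\<And>\<psi>. Om_cont \<psi> \<Longrightarrow> (\<integral>x. ruelle \<mu> f \<psi> x \<partial>\<nu>) = lam * (\<integral>x. \<psi> x \<partial>\<nu>)"
    and h_normalized: "(\<integral>x. h x \<partial>\<nu>) = 1"
    and RPF_conv: "\<And>\<psi>. Om_cont \<psi> \<Longrightarrow>
        (\<lambda>n. supnorm (\<lambda>x. (ruelle \<mu> f ^^ n) \<psi> x / lam ^ n - h x * (\<integral>y. \<psi> y \<partial>\<nu>))) \<longlonglongrightarrow> 0"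
    and phi_cont: "Om_cont \<phi>"
  shows "(\<lambda>n. supnorm (\<lambda>x. (1 / real n) * ((ruelle \<mu> f ^^ n) (birkhoff n \<phi>) x
                / (ruelle \<mu> f ^^ n) (\<lambda>_. 1) x) - (\<integral>y. \<phi> y * h y \<partial>\<nu>))) \<longlonglongrightarrow> 0"
proof -
  obtain D where D: "\<And>a b::'a. dist a b \<le> D" "D \<ge> 0" using dist_bdd[OF M_compact] by blast
  have fu: "ucb f" using ucb_holder[OF D(1) f_holder alpha(1)] .
  interpret R: RS \<mu> f D unfolding RS_def RS_axioms_def using mu_prob mu_borel fu D(1) by blast
  have hu: "ucb h" by (rule Om_cont_ucb[OF M_compact h_cont])
  have phu: "ucb \<phi>" by (rule Om_cont_ucb[OF M_compact phi_cont])
  obtain x0 where x0: "\<And>x. h x0 \<le> h x" using Om_cont_min[OF M_compact h_cont] by blast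
  define m0 where "m0 = h x0"
  have m0: "m0 > 0" "\<And>x. h x \<ge> m0" using h_pos x0 unfolding m0_def by auto
  obtain H where H: "H \<ge> 0" "\<And>x. \<bar>h x\<bar> \<le> H" using ucb_bound[OF hu] by blast
  have Hx: "\<And>x. h x \<le> H" using H(2) abs_le_D1 by blast
  obtain B\<phi> where B\<phi>: "B\<phi> \<ge> 0" "\<And>x. \<bar>\<phi> x\<bar> \<le> B\<phi>" using ucb_bound[OF phu] by blast
  have eig1: "R.L h = (\<lambda>x. lam * h x)" using h_eigen by auto
  have eig: "(R.L ^^ n) h = (\<lambda>x. lam^n * h x)" for n
  proof (induction n)
    case 0 then show ?case by simp
  next
    case (Suc n)
    have "(R.L ^^ Suc n) h = R.L (\<lambda>x. lam^n * h x)" using Suc by simp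
    also have "\<dots> = (\<lambda>x. lam^n * R.L h x)" by (rule R.L_scale)
    finally show ?case using eig1 by (simp add: ac_simps)
  qed
  define Rr where "Rr = H / m0"
  have Rr0: "Rr \<ge> 0" using H m0 by (simp add: Rr_def)
  have lamn: "\<And>n. lam^n > 0" using lam_pos by simp
  have lamn0: "\<And>n. lam^n \<noteq> 0" using lam_pos by simp
  have bnd: "\<bar>(R.L ^^ n) \<psi> x / lam^n\<bar> \<le> B * Rr" if "ucb \<psi>" "\<And>y. \<bar>\<psi> y\<bar> \<le> B" for n \<psi> B x
  proof -
    have "\<bar>(R.L ^^ n) \<psi> x\<bar> \<le> B / m0 * lam^n * H"
      by (rule R.Ln_bound[OF hu m0(2) m0(1) Hx eig lam_pos that])
    then have "\<bar>(R.L ^^ n) \<psi> x\<bar> / lam^n \<le> (B / m0 * lam^n * H) / lam^n"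
      by (rule divide_right_mono) (use lamn[of n] in simp)
    also have "B / m0 * lam^n * H = (B / m0 * H) * lam^n" by (simp only: ac_simps)
    also have "(B / m0 * H) * lam^n / lam^n = B / m0 * H" using lamn[of n] lam_pos by simp
    finally have "\<bar>(R.L ^^ n) \<psi> x\<bar> / lam^n \<le> B / m0 * H" .
    moreover have "\<bar>(R.L ^^ n) \<psi> x / lam^n\<bar> = \<bar>(R.L ^^ n) \<psi> x\<bar> / lam^n" using abs_div_pos[OF lamn[of n], of "(R.L ^^ n) \<psi> x"] by (rule sym)
    moreover have "B / m0 * H = B * Rr" unfolding Rr_def by simp
    ultimately show ?thesis by linarith
  qed
  define u where "u j x = (R.L ^^ j) (\<lambda>_. 1) x / lam^j" for j x
  have uu: "ucb (u j)" for j
  proof -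
    have "u j = (\<lambda>x. (1 / lam^j) * (R.L ^^ j) (\<lambda>_. 1) x)" by (auto simp: u_def fun_eq_iff)
    then show ?thesis using ucb_scale[OF R.Ln_ucb[OF ucb_const]] by metis
  qed
  have ub: "\<bar>u j x\<bar> \<le> Rr" for j x
  proof -
    have "\<bar>(R.L ^^ j) (\<lambda>_. 1) x / lam^j\<bar> \<le> 1 * Rr" by (rule bnd) (auto intro: ucb_const)
    then show ?thesis unfolding u_def by simp
  qed
  have int1: "(\<integral>y. 1 \<partial>\<nu>) = (1::real)" using prob_space.prob_space[OF nu_prob] by simp
  have U1: "\<forall>e>0. \<forall>\<^sub>F n in sequentially. \<forall>x. \<bar>u n x - h x\<bar> \<le> e"
  proof (rule sup_to_unif)
    show "(\<lambda>n. supnorm (\<lambda>x. u n x - h x)) \<longlonglongrightarrow> 0"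
      using RPF_conv[OF ucb_Om_cont[OF ucb_const[of 1]]] unfolding int1 u_def by simp
    fix n show "\<exists>B. \<forall>x. \<bar>u n x - h x\<bar> \<le> B"
    proof (intro exI allI)
      fix x show "\<bar>u n x - h x\<bar> \<le> Rr + H"
        using abs_triangle_ineq4[of "u n x" "h x"] ub[of n x] H(2)[of x] by linarith
    qed
  qed
  define c where "c = (\<integral>y. \<phi> y * h y \<partial>\<nu>)"
  define Q where "Q m x = (R.L ^^ m) (\<lambda>y. \<phi> y * h y) x / lam^m" for m x
  have phh: "ucb (\<lambda>y. \<phi> y * h y)" by (rule ucb_mult[OF phu hu])
  have phhb: "\<bar>\<phi> y * h y\<bar> \<le> B\<phi> * H" for y
    using B\<phi> H by (simp add: abs_mult mult_mono)
  have hcb: "\<bar>h x * c\<bar> \<le> H * \<bar>c\<bar>" for x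
    using H by (simp add: abs_mult mult_right_mono)
  have U2: "\<forall>e>0. \<forall>\<^sub>F n in sequentially. \<forall>x. \<bar>Q n x - h x * c\<bar> \<le> e"
  proof (rule sup_to_unif)
    show "(\<lambda>n. supnorm (\<lambda>x. Q n x - h x * c)) \<longlonglongrightarrow> 0"
      using RPF_conv[OF ucb_Om_cont[OF phh]] unfolding Q_def c_def by simp
    fix n show "\<exists>B. \<forall>x. \<bar>Q n x - h x * c\<bar> \<le> B"
    proof (intro exI allI)
      fix x
      have "\<bar>Q n x\<bar> \<le> B\<phi> * H * Rr" unfolding Q_def by (rule bnd[OF phh phhb])
      then show "\<bar>Q n x - h x * c\<bar> \<le> B\<phi> * H * Rr + H * \<bar>c\<bar>" using hcb[of x] by linarith
    qed
  qed
  define P where "P j x = (R.L ^^ j) (\<lambda>y. \<phi> y * u j y)" for j x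
  have ident: "(R.L ^^ n) (birkhoff n \<phi>) x / lam^n
      = (\<Sum>j<n. (R.L ^^ (n-j)) (\<lambda>y. \<phi> y * u j y) x / lam^(n-j))" for n x
  proof -
    have bk: "birkhoff n \<phi> = (\<lambda>y. \<Sum>j<n. \<phi> ((shift ^^ j) y))" by (simp add: fun_eq_iff birkhoff_def)
    have "(R.L ^^ n) (birkhoff n \<phi>) x = (\<Sum>j<n. (R.L ^^ n) (\<lambda>y. \<phi> ((shift ^^ j) y)) x)"
      unfolding bk using R.Ln_sum[of "{..<n}" "\<lambda>j y. \<phi> ((shift ^^ j) y)" n] ucb_shiftpow[OF D(1) phu]
      by simp
    also have "\<dots> = (\<Sum>j<n. lam^j * (R.L ^^ (n-j)) (\<lambda>y. \<phi> y * u j y) x)"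
    proof (rule sum.cong[OF refl])
      fix j assume "j \<in> {..<n}"
      then have nj: "n - j + j = n" by simp
      have split: "(R.L ^^ n) = (R.L ^^ (n-j)) \<circ> (R.L ^^ j)"
        using funpow_add[of "n-j" j R.L] nj by simp
      have "(R.L ^^ j) (\<lambda>y. \<phi> ((shift ^^ j) y)) = (R.L ^^ j) (\<lambda>y. \<phi> ((shift ^^ j) y) * 1)" by simp
      also have "\<dots> = (\<lambda>x. \<phi> x * (R.L ^^ j) (\<lambda>_. 1) x)" by (rule R.Ln_pull)
      also have "\<dots> = (\<lambda>x. lam^j * (\<phi> x * u j x))"
        using lamn0[of j] by (auto simp: u_def fun_eq_iff)
      finally have "(R.L ^^ n) (\<lambda>y. \<phi> ((shift ^^ j) y)) = (R.L ^^ (n-j)) (\<lambda>x. lam^j * (\<phi> x * u j x))"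
        by (simp add: split)
      also have "\<dots> = (\<lambda>x. lam^j * (R.L ^^ (n-j)) (\<lambda>y. \<phi> y * u j y) x)" by (rule R.Ln_scale)
      finally show "(R.L ^^ n) (\<lambda>y. \<phi> ((shift ^^ j) y)) x = lam^j * (R.L ^^ (n-j)) (\<lambda>y. \<phi> y * u j y) x"
        by simp
    qed
    finally have "(R.L ^^ n) (birkhoff n \<phi>) x / lam^n = (\<Sum>j<n. lam^j * (R.L ^^ (n-j)) (\<lambda>y. \<phi> y * u j y) x / lam^n)"
      by (simp add: sum_divide_distrib)
    also have "\<dots> = (\<Sum>j<n. (R.L ^^ (n-j)) (\<lambda>y. \<phi> y * u j y) x / lam^(n-j))"
    proof (rule sum.cong[OF refl])
      fix j assume "j \<in> {..<n}"
      then have "j + (n - j) = n" by simp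
      then have pn: "lam^n = lam^j * lam^(n-j)" by (metis power_add)
      show "lam^j * (R.L ^^ (n-j)) (\<lambda>y. \<phi> y * u j y) x / lam^n = (R.L ^^ (n-j)) (\<lambda>y. \<phi> y * u j y) x / lam^(n-j)"
        by (simp only: pn nonzero_mult_divide_mult_cancel_left[OF lamn0])
    qed
    finally show ?thesis .
  qed
  define v1 where "v1 n j x = Q (n-j) x - h x * c" for n j x
  define v2 where "v2 n j x = (R.L ^^ (n-j)) (\<lambda>y. \<phi> y * (u j y - h y)) x / lam^(n-j)" for n j x
  have uh: "ucb (\<lambda>y. \<phi> y * (u j y - h y))" for j by (intro ucb_mult ucb_minus phu uu hu)
  have uhb: "\<bar>\<phi> y * (u j y - h y)\<bar> \<le> B\<phi> * (Rr + H)" for j y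
  proof -
    have "\<bar>u j y - h y\<bar> \<le> Rr + H" using ub[of j y] H(2)[of y] by linarith
    then show ?thesis using B\<phi>(1) B\<phi>(2)[of y] by (simp add: abs_mult mult_mono)
  qed
  have decomp: "(R.L ^^ (n-j)) (\<lambda>y. \<phi> y * u j y) x / lam^(n-j) - h x * c = v1 n j x + v2 n j x" for n j x
  proof -
    have "(R.L ^^ (n-j)) (\<lambda>y. \<phi> y * u j y) = (R.L ^^ (n-j)) (\<lambda>y. \<phi> y * h y + \<phi> y * (u j y - h y))"
      by (simp add: algebra_simps)
    also have "\<dots> = (\<lambda>x. (R.L ^^ (n-j)) (\<lambda>y. \<phi> y * h y) x + (R.L ^^ (n-j)) (\<lambda>y. \<phi> y * (u j y - h y)) x)"
      by (rule R.Ln_add[OF phh uh])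
    finally show ?thesis unfolding v1_def v2_def Q_def by (simp add: add_divide_distrib)
  qed
  have C1: "\<forall>e>0. \<forall>\<^sub>F n in sequentially. \<forall>x. \<bar>(1 / real n) * (\<Sum>j<n. v1 n j x)\<bar> \<le> e"
  proof (rule cesaro)
    fix n j x
    have "\<bar>Q (n-j) x\<bar> \<le> B\<phi> * H * Rr" unfolding Q_def by (rule bnd[OF phh phhb])
    then show "\<bar>v1 n j x\<bar> \<le> B\<phi> * H * Rr + H * \<bar>c\<bar>" unfolding v1_def using hcb[of x] by linarith
  next
    fix e :: real assume e: "e > 0"
    obtain N where N: "\<And>m x. m \<ge> N \<Longrightarrow> \<bar>Q m x - h x * c\<bar> \<le> e"
      using U2[rule_format, OF e] unfolding eventually_sequentially by blast
    have "card {j. j < n \<and> \<not> \<bar>v1 n j x\<bar> \<le> e} \<le> N" for n x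
    proof -
      have "{j. j < n \<and> \<not> \<bar>v1 n j x\<bar> \<le> e} \<subseteq> {n-N..<n}"
      proof
        fix j assume "j \<in> {j. j < n \<and> \<not> \<bar>v1 n j x\<bar> \<le> e}"
        then have j: "j < n" "\<not> \<bar>Q (n-j) x - h x * c\<bar> \<le> e" unfolding v1_def by auto
        then have "\<not> n - j \<ge> N" using N by blast
        then show "j \<in> {n-N..<n}" using j(1) by simp
      qed
      then have "card {j. j < n \<and> \<not> \<bar>v1 n j x\<bar> \<le> e} \<le> card {n-N..<n}" by (intro card_mono) auto
      then show ?thesis by simp
    qed
    then show "\<exists>N. \<forall>n x. card {j. j < n \<and> \<not> \<bar>v1 n j x\<bar> \<le> e} \<le> N" by blast
  qed
  have C2: "\<forall>e>0. \<forall>\<^sub>F n in sequentially. \<forall>x. \<bar>(1 / real n) * (\<Sum>j<n. v2 n j x)\<bar> \<le> e"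
  proof (rule cesaro)
    fix n j x
    show "\<bar>v2 n j x\<bar> \<le> B\<phi> * (Rr + H) * Rr" unfolding v2_def by (rule bnd[OF uh uhb])
  next
    fix e :: real assume e: "e > 0"
    define e' where "e' = e / (B\<phi> * Rr + 1)"
    have "B\<phi> * Rr \<ge> 0" by (rule mult_nonneg_nonneg[OF B\<phi>(1) Rr0])
    then have p: "B\<phi> * Rr + 1 > 0" by linarith
    have e': "e' > 0" unfolding e'_def using divide_pos_pos[OF e p] .
    obtain N where N: "\<And>m x. m \<ge> N \<Longrightarrow> \<bar>u m x - h x\<bar> \<le> e'"
      using U1[rule_format, OF e'] unfolding eventually_sequentially by blast
    have good: "\<bar>v2 n j x\<bar> \<le> e" if "j \<ge> N" for n j x
    proof -
      have "\<bar>\<phi> y * (u j y - h y)\<bar> \<le> B\<phi> * e'" for y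
        using N[OF that, of y] B\<phi> by (simp add: abs_mult mult_mono)
      then have "\<bar>v2 n j x\<bar> \<le> B\<phi> * e' * Rr" unfolding v2_def by (rule bnd[OF uh])
      also have "\<dots> \<le> e"
      proof -
        have "B\<phi> * e' * Rr = e * (B\<phi> * Rr / (B\<phi> * Rr + 1))" unfolding e'_def
          by (simp add: ac_simps)
        also have "\<dots> \<le> e * 1"
        proof (rule mult_left_mono)
          show "B\<phi> * Rr / (B\<phi> * Rr + 1) \<le> 1" using divide_le_eq_1_pos[OF p] by simp
        qed (use e in simp)
        finally show ?thesis by simp
      qed
      finally show ?thesis .
    qed
    have "card {j. j < n \<and> \<not> \<bar>v2 n j x\<bar> \<le> e} \<le> N" for n x
    proof -
      have "{j. j < n \<and> \<not> \<bar>v2 n j x\<bar> \<le> e} \<subseteq> {..<N}"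
      proof
        fix j assume "j \<in> {j. j < n \<and> \<not> \<bar>v2 n j x\<bar> \<le> e}"
        then have "\<not> j \<ge> N" using good by blast
        then show "j \<in> {..<N}" by simp
      qed
      then have "card {j. j < n \<and> \<not> \<bar>v2 n j x\<bar> \<le> e} \<le> card {..<N}" by (intro card_mono) auto
      then show ?thesis by simp
    qed
    then show "\<exists>N. \<forall>n x. card {j. j < n \<and> \<not> \<bar>v2 n j x\<bar> \<le> e} \<le> N" by blast
  qed
  define T where "T n x = (1 / real n) * ((R.L ^^ n) (birkhoff n \<phi>) x / lam^n)" for n x
  have TT: "\<forall>e>0. \<forall>\<^sub>F n in sequentially. \<forall>x. \<bar>T n x - h x * c\<bar> \<le> e"
  proof (intro allI impI)
    fix e :: real assume e: "e > 0"
    have ev: "\<forall>\<^sub>F n in sequentially. (\<forall>x. \<bar>(1 / real n) * (\<Sum>j<n. v1 n j x)\<bar> \<le> e/2)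
        \<and> (\<forall>x. \<bar>(1 / real n) * (\<Sum>j<n. v2 n j x)\<bar> \<le> e/2) \<and> n \<ge> 1"
      using e by (intro eventually_conj[OF C1[rule_format] eventually_conj[OF C2[rule_format] eventually_ge_at_top[of 1]]]) simp_all
    show "\<forall>\<^sub>F n in sequentially. \<forall>x. \<bar>T n x - h x * c\<bar> \<le> e"
    proof (rule eventually_mono[OF ev], intro allI)
      fix n x assume a: "(\<forall>x. \<bar>(1 / real n) * (\<Sum>j<n. v1 n j x)\<bar> \<le> e/2)
        \<and> (\<forall>x. \<bar>(1 / real n) * (\<Sum>j<n. v2 n j x)\<bar> \<le> e/2) \<and> n \<ge> 1"
      have "T n x - h x * c = (1 / real n) * (\<Sum>j<n. (R.L ^^ (n-j)) (\<lambda>y. \<phi> y * u j y) x / lam^(n-j) - h x * c)"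
        using a by (simp add: T_def ident sum_subtractf field_simps)
      also have "\<dots> = (1 / real n) * (\<Sum>j<n. v1 n j x) + (1 / real n) * (\<Sum>j<n. v2 n j x)"
        by (simp add: decomp sum.distrib distrib_left)
      finally have eq: "T n x - h x * c = (1 / real n) * (\<Sum>j<n. v1 n j x) + (1 / real n) * (\<Sum>j<n. v2 n j x)" .
      have "\<bar>T n x - h x * c\<bar> \<le> \<bar>(1 / real n) * (\<Sum>j<n. v1 n j x)\<bar> + \<bar>(1 / real n) * (\<Sum>j<n. v2 n j x)\<bar>"
        unfolding eq by (rule abs_triangle_ineq)
      moreover have "\<bar>(1 / real n) * (\<Sum>j<n. v1 n j x)\<bar> \<le> e/2" "\<bar>(1 / real n) * (\<Sum>j<n. v2 n j x)\<bar> \<le> e/2"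
        using a by auto
      ultimately show "\<bar>T n x - h x * c\<bar> \<le> e" by linarith
    qed
  qed
  show ?thesis
  proof (rule unif_to_sup, intro allI impI)
    fix e :: real assume e: "e > 0"
    define e1 where "e1 = e * m0 / (2 * (1 + \<bar>c\<bar>))"
    have e1: "e1 > 0" using e m0 by (simp add: e1_def add_pos_nonneg)
    have ev: "\<forall>\<^sub>F n in sequentially. (\<forall>x. \<bar>T n x - h x * c\<bar> \<le> e1) \<and> (\<forall>x. \<bar>u n x - h x\<bar> \<le> min e1 (m0/2))"
    proof -
      have mm: "min e1 (m0/2) > 0" using e1 m0(1) by simp
      show ?thesis by (rule eventually_conj[OF TT[rule_format, OF e1] U1[rule_format, OF mm]])
    qed
    show "\<forall>\<^sub>F n in sequentially. \<forall>x. \<bar>(1 / real n) * ((R.L ^^ n) (birkhoff n \<phi>) x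
                / (R.L ^^ n) (\<lambda>_. 1) x) - (\<integral>y. \<phi> y * h y \<partial>\<nu>)\<bar> \<le> e"
    proof (rule eventually_mono[OF ev], intro allI)
      fix n x assume a: "(\<forall>x. \<bar>T n x - h x * c\<bar> \<le> e1) \<and> (\<forall>x. \<bar>u n x - h x\<bar> \<le> min e1 (m0/2))"
      have a1: "\<bar>T n x - h x * c\<bar> \<le> e1" and a2: "\<bar>u n x - h x\<bar> \<le> e1" and a3: "\<bar>u n x - h x\<bar> \<le> m0/2"
        using a by auto
      have upos: "u n x \<ge> m0/2" using a3 m0(2)[of x] by linarith
      have L1: "(R.L ^^ n) (\<lambda>_. 1) x = lam^n * u n x" using lamn0[of n] by (simp add: u_def)
      have eq: "(1 / real n) * ((R.L ^^ n) (birkhoff n \<phi>) x / (R.L ^^ n) (\<lambda>_. 1) x) - c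
          = (T n x - c * u n x) / u n x"
      proof -
        have u0: "u n x \<noteq> 0" using upos m0(1) by simp
        show ?thesis unfolding L1 T_def using lamn0[of n] u0 by (simp add: field_simps)
      qed
      have num: "\<bar>T n x - c * u n x\<bar> \<le> e1 * (1 + \<bar>c\<bar>)"
      proof -
        have "T n x - c * u n x = (T n x - h x * c) - c * (u n x - h x)" by (simp add: algebra_simps)
        then have "\<bar>T n x - c * u n x\<bar> \<le> \<bar>T n x - h x * c\<bar> + \<bar>c\<bar> * \<bar>u n x - h x\<bar>"
          by (simp add: abs_mult[symmetric] abs_triangle_ineq4)
        also have "\<dots> \<le> e1 + \<bar>c\<bar> * e1" using a1 a2 by (intro add_mono mult_left_mono) auto
        finally show ?thesis by (simp add: algebra_simps)
      qed
      have "\<bar>(T n x - c * u n x) / u n x\<bar> = \<bar>T n x - c * u n x\<bar> / u n x"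
        using upos m0(1) by simp
      also have "\<dots> \<le> (e1 * (1 + \<bar>c\<bar>)) / (m0/2)"
        using num upos m0(1) by (intro frac_le) auto
      also have "\<dots> = e"
      proof -
        have q: "1 + \<bar>c\<bar> \<noteq> 0" by (metis abs_ge_zero add_pos_nonneg less_numeral_extra(1) order_less_irrefl)
        have gen: "\<And>y x. y \<noteq> 0 \<Longrightarrow> x / (2*y) * y = x/(2::real)" by (simp add: field_simps)
        have "e1 * (1 + \<bar>c\<bar>) = e * m0 / 2" unfolding e1_def by (rule gen[OF q])
        then show ?thesis using m0(1) by simp
      qed
      finally show "\<bar>(1 / real n) * ((R.L ^^ n) (birkhoff n \<phi>) x
                / (R.L ^^ n) (\<lambda>_. 1) x) - (\<integral>y. \<phi> y * h y \<partial>\<nu>)\<bar> \<le> e"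
        using eq unfolding c_def by simp
    qed
  qed
qed


end
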